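(* Let $\mathcal{A}=\{H_1,\dots,H_n\}$ be an arrangement of distinct lines in $\mathbb{P}^2_{\mathbb{C}}$ and let $\mathcal{A}_t=\{H_1,\dots,H_t\}$ for $t=1,\dots,n$. If $|H_t\cap\operatorname{mult}(\mathcal{A}_t)|\le 2$ for all $t=1,\dots,n$, then $\mathcal{R}(I(\mathcal{A}))$ is irreducible.
   Context: Lines $H_i=\{a_ix+b_iy+c_iz=0\}$ are identified with points $(a_i:b_i:c_i)\in(\mathbb{P}^2)^*$; $\det(H_i,H_j,H_k)$ is the determinant of the matrix of their coefficient rows. The incidence is $I(\mathcal{A})=\{\{i,j,k\}: i,j,k \text{ distinct},\ H_i\cap H_j\cap H_k\ne\emptyset\}$. For a set $I$ of 3-subsets of $\{1,\dots,n\}$, $\mathcal{R}(I)=\{(H_1,\dots,H_n)\in((\mathbb{P}^2)^* )^n: H_i\ne H_j\ (i\ne j),\ \det(H_i,H_j,H_k)=0 \text{ iff } \{i,j,k\}\in I\}$, with the Zariski topology. $\operatorname{mult}(\mathcal{A})$ is the set of points lying on at least three lines of $\mathcal{A}$. *)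

theory Defs
  imports "HOL-Analysis.Analysis"
begin

text \<open>The complex projective plane (and its dual): a point is the set of nonzero
  scalar multiples of a nonzero vector of \<open>\<complex>\<^sup>3\<close>, i.e. its class of homogeneous coordinates.\<close>
definition P2 :: "(complex^3) set set" where
  "P2 = {{c *s v | c. c \<noteq> 0} | v. v \<noteq> 0}"

text \<open>Determinant of three lines (rows = coefficient vectors) vanishes; independent of representatives.\<close>
definition det_zero :: "(complex^3) set \<Rightarrow> (complex^3) set \<Rightarrow> (complex^3) set \<Rightarrow> bool" where
  "det_zero P Q R \<longleftrightarrow> (\<exists>u\<in>P. \<exists>v\<in>Q. \<exists>w\<in>R.
      det ((\<chi> i. if i = 1 then u else if i = 2 then v else w) :: complex^3^3) = 0)"

definition on_line :: "(complex^3) set \<Rightarrow> (complex^3) set \<Rightarrow> bool" where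
  "on_line p H \<longleftrightarrow> (\<exists>x\<in>p. \<exists>a\<in>H. (\<Sum>i\<in>UNIV. a $ i * x $ i) = 0)"

definition line_points :: "(complex^3) set \<Rightarrow> (complex^3) set set" where
  "line_points H = {p \<in> P2. on_line p H}"

definition incidence :: "nat \<Rightarrow> (nat \<Rightarrow> (complex^3) set) \<Rightarrow> nat set set" where
  "incidence n H = {{i, j, k} | i j k. i \<in> {1..n} \<and> j \<in> {1..n} \<and> k \<in> {1..n} \<and>
      i \<noteq> j \<and> i \<noteq> k \<and> j \<noteq> k \<and>
      (\<exists>p\<in>P2. on_line p (H i) \<and> on_line p (H j) \<and> on_line p (H k))}"

definition mult_pts :: "nat \<Rightarrow> (nat \<Rightarrow> (complex^3) set) \<Rightarrow> (complex^3) set set" where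
  "mult_pts t H = {p \<in> P2. card {i \<in> {1..t}. on_line p (H i)} \<ge> 3}"

text \<open>The realization space \<open>\<R>(I) \<subseteq> ((\<P>\<^sup>2)\<^sup>*)\<^sup>n\<close>; tuples are functions on \<open>{1..n}\<close>.\<close>
definition realization_space :: "nat \<Rightarrow> nat set set \<Rightarrow> (nat \<Rightarrow> (complex^3) set) set" where
  "realization_space n I = {H \<in> PiE {1..n} (\<lambda>_. P2).
      (\<forall>i\<in>{1..n}. \<forall>j\<in>{1..n}. i \<noteq> j \<longrightarrow> H i \<noteq> H j) \<and>
      (\<forall>i\<in>{1..n}. \<forall>j\<in>{1..n}. \<forall>k\<in>{1..n}. i \<noteq> j \<and> i \<noteq> k \<and> j \<noteq> k \<longrightarrow>
         (det_zero (H i) (H j) (H k) \<longleftrightarrow> {i, j, k} \<in> I))}"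

inductive_set polyfun :: "nat \<Rightarrow> ((nat \<Rightarrow> complex^3) \<Rightarrow> complex) set" for n :: nat where
  pconst: "(\<lambda>_. c) \<in> polyfun n"
| pcoord: "i \<in> {1..n} \<Longrightarrow> (\<lambda>x. x i $ j) \<in> polyfun n"
| padd: "f \<in> polyfun n \<Longrightarrow> g \<in> polyfun n \<Longrightarrow> (\<lambda>x. f x + g x) \<in> polyfun n"
| pmult: "f \<in> polyfun n \<Longrightarrow> g \<in> polyfun n \<Longrightarrow> (\<lambda>x. f x * g x) \<in> polyfun n"

definition multihom :: "nat \<Rightarrow> ((nat \<Rightarrow> complex^3) \<Rightarrow> complex) \<Rightarrow> bool" where
  "multihom n f \<longleftrightarrow> f \<in> polyfun n \<and> (\<exists>d :: nat \<Rightarrow> nat. \<forall>x (l :: nat \<Rightarrow> complex).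
      (\<forall>i\<in>{1..n}. l i \<noteq> 0) \<longrightarrow> f (\<lambda>i. l i *s x i) = (\<Prod>i\<in>{1..n}. l i ^ d i) * f x)"

definition zariski_closed :: "nat \<Rightarrow> (nat \<Rightarrow> (complex^3) set) set \<Rightarrow> bool" where
  "zariski_closed n C \<longleftrightarrow> (\<exists>F. (\<forall>f\<in>F. multihom n f) \<and>
      C = {H \<in> PiE {1..n} (\<lambda>_. P2). \<forall>f\<in>F. \<forall>x. (\<forall>i\<in>{1..n}. x i \<in> H i) \<longrightarrow> f x = 0})"

definition zariski_irreducible :: "nat \<Rightarrow> (nat \<Rightarrow> (complex^3) set) set \<Rightarrow> bool" where
  "zariski_irreducible n S \<longleftrightarrow> S \<noteq> {} \<and> S \<subseteq> PiE {1..n} (\<lambda>_. P2) \<and>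
     (\<forall>C1 C2. zariski_closed n C1 \<and> zariski_closed n C2 \<and> S \<subseteq> C1 \<union> C2 \<longrightarrow> S \<subseteq> C1 \<or> S \<subseteq> C2)"

end

theory Submission
  imports Defs "HOL-Computational_Algebra.Polynomial"
begin


definition dt :: "complex^3 \<Rightarrow> complex^3 \<Rightarrow> complex" where
  "dt a x = a$1*x$1 + a$2*x$2 + a$3*x$3"

definition cr :: "complex^3 \<Rightarrow> complex^3 \<Rightarrow> complex^3" where
  "cr u v = vector [u$2* v$3 - u$3* v$2, u$3* v$1 - u$1* v$3, u$1* v$2 - u$2* v$1]"

definition tp :: "complex^3 \<Rightarrow> complex^3 \<Rightarrow> complex^3 \<Rightarrow> complex" where
  "tp u v w = dt (cr u v) w"

lemma cr_comp[simp]: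
  "cr u v $ 1 = u$2* v$3 - u$3* v$2"
  "cr u v $ 2 = u$3* v$1 - u$1* v$3"
  "cr u v $ 3 = u$1* v$2 - u$2* v$1"
  by (simp_all add: cr_def)

lemma vec3_eq: "(u::complex^3) = v \<longleftrightarrow> u$1 = v$1 \<and> u$2 = v$2 \<and> u$3 = v$3"
  by (simp add: vec_eq_iff forall_3)

lemma vec3_nz: "(u::complex^3) \<noteq> 0 \<longleftrightarrow> u$1 \<noteq> 0 \<or> u$2 \<noteq> 0 \<or> u$3 \<noteq> 0"
  by (simp add: vec3_eq)

lemma dt_sym: "dt a b = dt b a"
  by (simp add: dt_def algebra_simps)

lemma dt_cr[simp]: "dt (cr u v) u = 0" "dt (cr u v) v = 0" "dt u (cr u v) = 0" "dt v (cr u v) = 0"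
  by (simp_all add: dt_def algebra_simps)

lemma dt_smult[simp]: "dt (c *s a) b = c * dt a b" "dt a (c *s b) = c * dt a b"
  by (simp_all add: dt_def algebra_simps)

lemma cr_smult[simp]: "cr (c *s u) v = c *s cr u v" "cr u (c *s v) = c *s cr u v"
  by (simp_all add: vec3_eq algebra_simps)

lemma cr_self[simp]: "cr u u = 0"
  by (simp add: vec3_eq)

lemma cr_cr: "cr (cr u v) w = dt u w *s v - dt v w *s u"
  by (simp add: vec3_eq dt_def algebra_simps)

lemma tp_cyc: "tp u v w = tp v w u"
  by (simp add: tp_def dt_def algebra_simps)

lemma tp_swap: "tp u v w = - tp v u w"
  by (simp add: tp_def dt_def algebra_simps)

lemma tp_smult[simp]: "tp (a *s u) (b *s v) (c *s w) = a * b * c * tp u v w"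
  by (simp add: tp_def)

lemma par:
  assumes "cr a b = 0" "a \<noteq> 0"
  shows "\<exists>c. b = c *s a"
proof -
  from assms(1) have e: "a$2*b$3 = a$3*b$2" "a$3*b$1 = a$1*b$3" "a$1*b$2 = a$2*b$1"
    by (auto simp: vec3_eq)
  from assms(2) consider "a$1 \<noteq> 0" | "a$2 \<noteq> 0" | "a$3 \<noteq> 0" by (auto simp: vec3_nz)
  then show ?thesis
  proof cases
    case 1
    show ?thesis
      apply (rule exI[of _ "b$1 / a$1"])
      using 1 e by (auto simp: vec3_eq field_simps; metis mult.commute)
  next
    case 2
    show ?thesis
      apply (rule exI[of _ "b$2 / a$2"])
      using 2 e by (auto simp: vec3_eq field_simps; metis mult.commute)
  next
    case 3
    show ?thesis
      apply (rule exI[of _ "b$3 / a$3"])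
      using 3 e by (auto simp: vec3_eq field_simps; metis mult.commute)
  qed
qed

lemma perp2:
  assumes "cr u v \<noteq> 0" "dt u w = 0" "dt v w = 0"
  shows "\<exists>c. w = c *s cr u v"
proof -
  have "cr (cr u v) w = 0" using assms by (simp add: cr_cr)
  then show ?thesis using par assms(1) by blast
qed

lemma keytp:
  assumes "p \<noteq> 0" "dt u p = 0" "dt v p = 0" "dt w p = 0" "cr u v \<noteq> 0"
  shows "tp u v w = 0"
proof -
  obtain c where c: "p = c *s cr u v" using perp2 assms by blast
  with assms(1) have "c \<noteq> 0" by auto
  have "dt w p = c * tp u v w" by (simp add: c tp_def dt_sym)
  with assms(4) \<open>c \<noteq> 0\<close> show ?thesis by simp
qed

definition sol :: "complex^3 \<Rightarrow> complex^3 \<Rightarrow> complex^3" where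
  "sol p w = (if p$1 \<noteq> 0 then vector [0, w$3/p$1, -w$2/p$1]
     else if p$2 \<noteq> 0 then vector [-w$3/p$2, 0, w$1/p$2]
     else vector [w$2/p$3, -w$1/p$3, 0])"

lemma sol:
  assumes "p \<noteq> 0" "dt p w = 0"
  shows "cr p (sol p w) = w"
proof -
  have d: "p$1*w$1 + p$2*w$2 + p$3*w$3 = 0" using assms(2) by (simp add: dt_def)
  consider "p$1 \<noteq> 0" | "p$1 = 0" "p$2 \<noteq> 0" | "p$1 = 0" "p$2 = 0" "p$3 \<noteq> 0"
    using assms(1) by (auto simp: vec3_nz)
  then show ?thesis
  proof cases
    case 1
    then show ?thesis using d by (simp add: sol_def vec3_eq field_simps; algebra)
  next
    case 2
    then show ?thesis using d by (simp add: sol_def vec3_eq field_simps; algebra)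
  next
    case 3
    then show ?thesis using d by (simp add: sol_def vec3_eq field_simps; algebra)
  qed
qed

lemma det_rows: "det ((\<chi> i. if i = 1 then u else if i = 2 then v else w) :: complex^3^3) = tp u v w"
  by (simp add: det_3 tp_def dt_def algebra_simps)



definition cls :: "complex^3 \<Rightarrow> (complex^3) set" where
  "cls v = {c *s v | c. c \<noteq> 0}"

lemma in_cls: "x \<in> cls v \<longleftrightarrow> (\<exists>c. c \<noteq> 0 \<and> x = c *s v)"
  by (auto simp: cls_def)

lemma self_in_cls: "v \<in> cls v"
  unfolding in_cls by (rule exI[of _ 1]) simp

lemma cls_in_P2: "v \<noteq> 0 \<Longrightarrow> cls v \<in> P2"
  unfolding P2_def cls_def by blast

lemma P2_E: assumes "A \<in> P2" obtains v where "v \<noteq> 0" "A = cls v"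
  using assms unfolding P2_def cls_def by blast

definition rep :: "(complex^3) set \<Rightarrow> complex^3" where
  "rep A = (SOME v. v \<noteq> 0 \<and> A = cls v)"

lemma rep: assumes "A \<in> P2" shows "rep A \<noteq> 0" "A = cls (rep A)"
proof -
  obtain v where "v \<noteq> 0" "A = cls v" using P2_E assms by blast
  then have "\<exists>v. v \<noteq> 0 \<and> A = cls v" by blast
  then have "rep A \<noteq> 0 \<and> A = cls (rep A)" unfolding rep_def by (rule someI_ex)
  then show "rep A \<noteq> 0" "A = cls (rep A)" by auto
qed

lemma cls_smult: "c \<noteq> 0 \<Longrightarrow> cls (c *s v) = cls v"
proof -
  assume c: "c \<noteq> 0"
  show ?thesis
  proof (rule set_eqI)
    fix x
    show "x \<in> cls (c *s v) \<longleftrightarrow> x \<in> cls v"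
      unfolding in_cls
    proof
      assume "\<exists>d. d \<noteq> 0 \<and> x = d *s (c *s v)"
      then obtain d where "d \<noteq> 0" "x = d *s (c *s v)" by blast
      then show "\<exists>d. d \<noteq> 0 \<and> x = d *s v" using c by (intro exI[of _ "d*c"]) (simp add: vec3_eq)
    next
      assume "\<exists>d. d \<noteq> 0 \<and> x = d *s v"
      then obtain d where "d \<noteq> 0" "x = d *s v" by blast
      then show "\<exists>d. d \<noteq> 0 \<and> x = d *s (c *s v)" using c by (intro exI[of _ "d/c"]) (simp add: vec3_eq)
    qed
  qed
qed

lemma cls_eq_imp_mult: assumes "cls u = cls v" shows "\<exists>c. c \<noteq> 0 \<and> v = c *s u"
proof -
  have "v \<in> cls u" using assms self_in_cls by auto
  then show ?thesis by (simp add: in_cls)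
qed

lemma cls_eq_iff: assumes "u \<noteq> 0" "v \<noteq> 0" shows "cls u = cls v \<longleftrightarrow> cr u v = 0"
proof
  assume "cls u = cls v"
  then obtain c where "v = c *s u" using cls_eq_imp_mult by blast
  then show "cr u v = 0" by simp
next
  assume "cr u v = 0"
  then obtain c where c: "v = c *s u" using par assms by blast
  with assms have "c \<noteq> 0" by auto
  then show "cls u = cls v" using c cls_smult by simp
qed

lemma cls_dt: assumes "cls u = cls v" "dt u w = 0" shows "dt v w = 0"
  using cls_eq_imp_mult[OF assms(1)] assms(2) by auto

lemma sum_dt: "(\<Sum>i\<in>UNIV. a $ i * x $ i) = dt a x"
  by (simp add: sum_3 dt_def)

lemma on_line_cls: assumes "a \<noteq> 0" shows "on_line (cls x) (cls a) \<longleftrightarrow> dt a x = 0"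
  unfolding on_line_def sum_dt
proof
  assume "\<exists>x'\<in>cls x. \<exists>a'\<in>cls a. dt a' x' = 0"
  then obtain c d where "c \<noteq> 0" "d \<noteq> 0" "dt (d *s a) (c *s x) = 0" by (auto simp: in_cls)
  then show "dt a x = 0" by simp
next
  assume "dt a x = 0"
  then show "\<exists>x'\<in>cls x. \<exists>a'\<in>cls a. dt a' x' = 0" using self_in_cls by blast
qed

lemma det_zero_cls: "det_zero (cls u) (cls v) (cls w) \<longleftrightarrow> tp u v w = 0"
  unfolding det_zero_def det_rows
proof
  assume "\<exists>u'\<in>cls u. \<exists>v'\<in>cls v. \<exists>w'\<in>cls w. tp u' v' w' = 0"
  then obtain a b c where "a \<noteq> 0" "b \<noteq> 0" "c \<noteq> 0" "tp (a *s u) (b *s v) (c *s w) = 0"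
    by (auto simp: in_cls)
  then show "tp u v w = 0" by simp
next
  assume "tp u v w = 0"
  then show "\<exists>u'\<in>cls u. \<exists>v'\<in>cls v. \<exists>w'\<in>cls w. tp u' v' w' = 0" using self_in_cls by blast
qed



lemma psub: "f \<in> polyfun n \<Longrightarrow> g \<in> polyfun n \<Longrightarrow> (\<lambda>x. f x - g x) \<in> polyfun n"
proof -
  assume f: "f \<in> polyfun n" and g: "g \<in> polyfun n"
  have "(\<lambda>x. f x + (\<lambda>_. -1) x * g x) \<in> polyfun n"
    by (intro polyfun.padd polyfun.pmult f g polyfun.pconst)
  then show ?thesis by simp
qed

lemma polyfun_cr:
  assumes "\<forall>j. (\<lambda>y. u y $ j) \<in> polyfun n" "\<forall>j. (\<lambda>y. v y $ j) \<in> polyfun n"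
  shows "\<forall>j. (\<lambda>y. cr (u y) (v y) $ j) \<in> polyfun n"
proof
  fix j :: 3
  have m: "\<And>a b c d. (\<lambda>y. u y $ a * v y $ b - u y $ c * v y $ d) \<in> polyfun n"
    by (intro psub polyfun.pmult assms[rule_format])
  show "(\<lambda>y. cr (u y) (v y) $ j) \<in> polyfun n"
  proof -
    consider "j = 1" | "j = 2" | "j = 3" using exhaust_3 by blast
    then show ?thesis
    proof cases
      case 1 then show ?thesis using m[of 2 3 3 2] by simp
    next
      case 2 then show ?thesis using m[of 3 1 1 3] by simp
    next
      case 3 then show ?thesis using m[of 1 2 2 1] by simp
    qed
  qed
qed

lemma polyfun_dt:
  assumes "\<forall>j. (\<lambda>y. u y $ j) \<in> polyfun n" "\<forall>j. (\<lambda>y. v y $ j) \<in> polyfun n"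
  shows "(\<lambda>y. dt (u y) (v y)) \<in> polyfun n"
  unfolding dt_def by (intro polyfun.padd polyfun.pmult assms[rule_format])

lemma polyfun_tp:
  assumes "\<forall>j. (\<lambda>y. u y $ j) \<in> polyfun n" "\<forall>j. (\<lambda>y. v y $ j) \<in> polyfun n"
     "\<forall>j. (\<lambda>y. w y $ j) \<in> polyfun n"
  shows "(\<lambda>y. tp (u y) (v y) (w y)) \<in> polyfun n"
  unfolding tp_def by (intro polyfun_dt polyfun_cr assms)

lemma polyfun_local: "f \<in> polyfun n \<Longrightarrow> \<forall>i\<in>{1..n}. x i = z i \<Longrightarrow> f x = f z"
  by (induction f rule: polyfun.induct) auto

lemma polyfun_comp:
  assumes "f \<in> polyfun n" "\<forall>i\<in>{1..n}. \<forall>j. (\<lambda>y. \<psi> y i $ j) \<in> polyfun n"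
  shows "(\<lambda>y. f (\<psi> y)) \<in> polyfun n"
  using assms
proof (induction f rule: polyfun.induct)
  case (pconst c) show ?case by (rule polyfun.pconst)
next
  case (pcoord i j) then show ?case by simp
next
  case (padd f g) then show ?case using polyfun.padd by blast
next
  case (pmult f g) then show ?case using polyfun.pmult by blast
qed

lemma polyfun_line:
  "f \<in> polyfun n \<Longrightarrow> \<exists>P. \<forall>t. f (\<lambda>i. a i + t *s (b i - a i)) = poly P t"
proof (induction f rule: polyfun.induct)
  case (pconst c)
  then show ?case by (intro exI[of _ "[:c:]"]) simp
next
  case (pcoord i j)
  show ?case by (intro exI[of _ "[:a i $ j, b i $ j - a i $ j:]"]) (simp add: algebra_simps)
next
  case (padd f g)
  then obtain P Q where "\<forall>t. f (\<lambda>i. a i + t *s (b i - a i)) = poly P t"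
    "\<forall>t. g (\<lambda>i. a i + t *s (b i - a i)) = poly Q t" by blast
  then show ?case by (intro exI[of _ "P + Q"]) simp
next
  case (pmult f g)
  then obtain P Q where "\<forall>t. f (\<lambda>i. a i + t *s (b i - a i)) = poly P t"
    "\<forall>t. g (\<lambda>i. a i + t *s (b i - a i)) = poly Q t" by blast
  then show ?case by (intro exI[of _ "P * Q"]) simp
qed

lemma prod_nz:
  assumes f: "f \<in> polyfun n" and g: "g \<in> polyfun n" and fa: "f a \<noteq> 0" and gb: "g b \<noteq> 0"
  shows "\<exists>z. f z * g z \<noteq> 0"
proof -
  obtain P where P: "\<forall>t. f (\<lambda>i. a i + t *s (b i - a i)) = poly P t" using polyfun_line[OF f] by blast
  obtain Q where Q: "\<forall>t. g (\<lambda>i. a i + t *s (b i - a i)) = poly Q t" using polyfun_line[OF g] by blast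
  have e0: "(\<lambda>i. a i + (0::complex) *s (b i - a i)) = a" by (rule ext) (simp add: vec_eq_iff)
  have e1: "(\<lambda>i. a i + (1::complex) *s (b i - a i)) = b" by (rule ext) (simp add: vec_eq_iff)
  have "poly P 0 \<noteq> 0" using P[rule_format, of 0] fa unfolding e0 by simp
  then have "P \<noteq> 0" by auto
  have "poly Q 1 \<noteq> 0" using Q[rule_format, of 1] gb unfolding e1 by simp
  then have "Q \<noteq> 0" by auto
  then have "P * Q \<noteq> 0" using \<open>P \<noteq> 0\<close> by simp
  then obtain t where "poly (P * Q) t \<noteq> 0" using poly_all_0_iff_0 by blast
  then have "f (\<lambda>i. a i + t *s (b i - a i)) * g (\<lambda>i. a i + t *s (b i - a i)) \<noteq> 0"
    using P Q by simp
  then show ?thesis by blast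
qed

lemma witness:
  assumes "finite S" "\<forall>c\<in>S. \<forall>j. (\<lambda>y. v c y $ j) \<in> polyfun n" "\<forall>c\<in>S. v c y1 \<noteq> 0"
  shows "\<exists>g\<in>polyfun n. g y1 \<noteq> 0 \<and> (\<forall>y. g y \<noteq> 0 \<longrightarrow> (\<forall>c\<in>S. v c y \<noteq> 0))"
  using assms
proof (induction S rule: finite_induct)
  case empty
  show ?case by (intro bexI[of _ "\<lambda>_. 1"]) (auto intro: polyfun.pconst)
next
  case (insert c S)
  have h1: "\<forall>c\<in>S. \<forall>j. (\<lambda>y. v c y $ j) \<in> polyfun n" "\<forall>c\<in>S. v c y1 \<noteq> 0"
    using insert.prems by simp_all
  obtain g where g: "g \<in> polyfun n" "g y1 \<noteq> 0" "\<forall>y. g y \<noteq> 0 \<longrightarrow> (\<forall>c\<in>S. v c y \<noteq> 0)"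
    using insert.IH[OF h1] by blast
  have "v c y1 \<noteq> 0" using insert.prems(2) by simp
  then have "\<exists>j. v c y1 $ j \<noteq> 0" by (simp add: vec_eq_iff)
  then obtain j where j: "v c y1 $ j \<noteq> 0" by blast
  have pj: "(\<lambda>y. v c y $ j) \<in> polyfun n" using insert.prems(1) by simp
  have "\<forall>y. g y * v c y $ j \<noteq> 0 \<longrightarrow> (\<forall>c'\<in>insert c S. v c' y \<noteq> 0)"
  proof (intro allI impI)
    fix y assume a: "g y * v c y $ j \<noteq> 0"
    then have "g y \<noteq> 0" "v c y $ j \<noteq> 0" by auto
    then have "v c y \<noteq> 0" by auto
    then show "\<forall>c'\<in>insert c S. v c' y \<noteq> 0" using g(3) \<open>g y \<noteq> 0\<close> by simp
  qed
  moreover have "(\<lambda>y. g y * v c y $ j) \<in> polyfun n" by (rule polyfun.pmult[OF g(1) pj])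
  moreover have "g y1 * v c y1 $ j \<noteq> 0" using g(2) j by simp
  ultimately show ?case by (intro bexI[of _ "\<lambda>y. g y * v c y $ j"]) simp_all
qed

lemma multihom_scale:
  assumes "multihom n f" "\<forall>i\<in>{1..n}. \<exists>c. c \<noteq> 0 \<and> x i = c *s z i" "f x \<noteq> 0"
  shows "f z \<noteq> 0"
proof -
  from assms(1) obtain d where fp: "f \<in> polyfun n" and
    d: "\<forall>x (l :: nat \<Rightarrow> complex). (\<forall>i\<in>{1..n}. l i \<noteq> 0) \<longrightarrow> f (\<lambda>i. l i *s x i) = (\<Prod>i\<in>{1..n}. l i ^ d i) * f x"
    unfolding multihom_def by blast
  from assms(2) obtain c where c: "\<forall>i\<in>{1..n}. c i \<noteq> 0 \<and> x i = c i *s z i" by metis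
  define l where "l i = (if i \<in> {1..n} then c i else 1)" for i
  have l: "\<forall>i\<in>{1..n}. l i \<noteq> 0" using c by (simp add: l_def)
  have "f x = f (\<lambda>i. l i *s z i)" using c by (intro polyfun_local[OF fp]) (simp add: l_def)
  also have "\<dots> = (\<Prod>i\<in>{1..n}. l i ^ d i) * f z" using d l by blast
  finally show ?thesis using assms(3) by auto
qed



definition Qp :: "nat set set \<Rightarrow> nat \<Rightarrow> (nat \<times> nat) set" where
  "Qp I t = {(a,b). a \<in> {1..<t} \<and> b \<in> {1..<t} \<and> a \<noteq> b \<and> {a,b,t} \<in> I}"

definition conc :: "nat set set \<Rightarrow> nat \<times> nat \<Rightarrow> nat \<Rightarrow> bool" where
  "conc I q x \<longleftrightarrow> x = fst q \<or> x = snd q \<or> {fst q, snd q, x} \<in> I"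

definition sep :: "nat set set \<Rightarrow> nat \<times> nat \<Rightarrow> nat \<times> nat \<Rightarrow> bool" where
  "sep I q r \<longleftrightarrow> (\<exists>x\<in>{fst r, snd r}. x \<noteq> fst q \<and> x \<noteq> snd q \<and> {fst q, snd q, x} \<notin> I)"

definition good :: "nat set set \<Rightarrow> nat \<Rightarrow> nat \<Rightarrow> nat \<times> nat \<Rightarrow> nat \<times> nat \<Rightarrow> bool" where
  "good I t k a b \<longleftrightarrow> k \<le> 2 \<and> (k \<ge> 1 \<longrightarrow> a \<in> Qp I t) \<and> (k = 2 \<longrightarrow> b \<in> Qp I t \<and> sep I a b) \<and>
     (\<forall>q\<in>Qp I t. (k \<ge> 1 \<and> conc I a (fst q) \<and> conc I a (snd q)) \<or> (k = 2 \<and> conc I b (fst q) \<and> conc I b (snd q)))"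

function phi :: "(nat \<Rightarrow> nat) \<Rightarrow> (nat \<Rightarrow> nat \<times> nat) \<Rightarrow> (nat \<Rightarrow> nat \<times> nat) \<Rightarrow> (nat \<Rightarrow> complex^3) \<Rightarrow> nat \<Rightarrow> complex^3" where
  "phi K A B y t = (if K t = 0 then y t
     else if K t = 1 then
       (if fst (A t) < t \<and> snd (A t) < t
        then cr (cr (phi K A B y (fst (A t))) (phi K A B y (snd (A t)))) (y t) else 0)
     else (if fst (A t) < t \<and> snd (A t) < t \<and> fst (B t) < t \<and> snd (B t) < t
        then cr (cr (phi K A B y (fst (A t))) (phi K A B y (snd (A t))))
                (cr (phi K A B y (fst (B t))) (phi K A B y (snd (B t)))) else 0))"
  by pat_completeness auto
termination by (relation "Wellfounded.measure (\<lambda>(K,A,B,y,t). t)") auto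

declare phi.simps[simp del]

lemma phi0: "K t = 0 \<Longrightarrow> phi K A B y t = y t"
  by (subst phi.simps) simp

lemma phi1: "K t = 1 \<Longrightarrow> fst (A t) < t \<Longrightarrow> snd (A t) < t \<Longrightarrow>
   phi K A B y t = cr (cr (phi K A B y (fst (A t))) (phi K A B y (snd (A t)))) (y t)"
  by (subst phi.simps) simp

lemma phi2: "K t = 2 \<Longrightarrow> fst (A t) < t \<Longrightarrow> snd (A t) < t \<Longrightarrow> fst (B t) < t \<Longrightarrow> snd (B t) < t \<Longrightarrow>
   phi K A B y t = cr (cr (phi K A B y (fst (A t))) (phi K A B y (snd (A t))))
                (cr (phi K A B y (fst (B t))) (phi K A B y (snd (B t))))"
  by (subst phi.simps) simp

lemma Qp_D: "q \<in> Qp I t \<Longrightarrow> fst q \<in> {1..<t} \<and> snd q \<in> {1..<t} \<and> fst q \<noteq> snd q \<and> {fst q, snd q, t} \<in> I"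
  by (auto simp: Qp_def)

locale arr =
  fixes n :: nat and I :: "nat set set" and K :: "nat \<Rightarrow> nat" and A B :: "nat \<Rightarrow> nat \<times> nat"
  assumes good: "\<forall>t\<in>{1..n}. good I t (K t) (A t) (B t)"
begin

abbreviation "ph \<equiv> phi K A B"

lemma ph_poly: "t \<in> {1..n} \<Longrightarrow> \<forall>j. (\<lambda>y. ph y t $ j) \<in> polyfun n"
proof (induction t rule: less_induct)
  case (less t)
  have g: "good I t (K t) (A t) (B t)" using good less.prems by blast
  have rng: "\<And>q. q \<in> Qp I t \<Longrightarrow> fst q \<in> {1..n} \<and> snd q \<in> {1..n} \<and> fst q < t \<and> snd q < t"
    using less.prems by (auto dest!: Qp_D)
  consider "K t = 0" | "K t = 1" | "K t = 2" using g unfolding good_def by linarith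
  then show ?case
  proof cases
    case 1
    then show ?thesis using less.prems by (simp add: phi0 polyfun.pcoord)
  next
    case 2
    then have q: "A t \<in> Qp I t" using g unfolding good_def by simp
    note r = rng[OF q]
    have "\<forall>j. (\<lambda>y. y t $ j) \<in> polyfun n" using less.prems by (simp add: polyfun.pcoord)
    then show ?thesis using 2 r by (simp add: phi1 polyfun_cr less.IH)
  next
    case 3
    then have q: "A t \<in> Qp I t" "B t \<in> Qp I t" using g unfolding good_def by simp_all
    note r = rng[OF q(1)] rng[OF q(2)]
    then show ?thesis using 3 r by (simp add: phi2 polyfun_cr less.IH)
  qed
qed


definition U where
  "U = {y. (\<forall>t\<in>{1..n}. ph y t \<noteq> 0) \<and> (\<forall>i\<in>{1..n}. \<forall>j\<in>{1..n}. i \<noteq> j \<longrightarrow> cr (ph y i) (ph y j) \<noteq> 0) \<and>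
     (\<forall>i\<in>{1..n}. \<forall>j\<in>{1..n}. \<forall>k\<in>{1..n}. i \<noteq> j \<and> i \<noteq> k \<and> j \<noteq> k \<and> {i,j,k} \<notin> I \<longrightarrow> tp (ph y i) (ph y j) (ph y k) \<noteq> 0)}"

definition Phi where "Phi y = restrict (\<lambda>t. cls (ph y t)) {1..n}"

lemma pick:
  assumes "t \<in> {1..n}" "q \<in> Qp I t"
  shows "\<exists>r. (r = A t \<and> K t \<ge> 1 \<or> r = B t \<and> K t = 2) \<and> conc I r (fst q) \<and> conc I r (snd q)"
  using good assms unfolding good_def by blast

lemma ph_perp:
  assumes t: "t \<in> {1..n}" and r: "r = A t \<and> K t \<ge> 1 \<or> r = B t \<and> K t = 2"
  shows "dt (cr (ph y (fst r)) (ph y (snd r))) (ph y t) = 0"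
proof -
  have g: "good I t (K t) (A t) (B t)" using good t by blast
  consider "K t = 1" | "K t = 2" using r g unfolding good_def by linarith
  then show ?thesis
  proof cases
    case 1
    then have "A t \<in> Qp I t" "r = A t" using g r unfolding good_def by auto
    then show ?thesis using 1 by (auto dest!: Qp_D simp: phi1)
  next
    case 2
    then have q: "A t \<in> Qp I t" "B t \<in> Qp I t" using g unfolding good_def by auto
    then have e: "ph y t = cr (cr (ph y (fst (A t))) (ph y (snd (A t)))) (cr (ph y (fst (B t))) (ph y (snd (B t))))"
      using 2 by (auto dest!: Qp_D simp: phi2)
    from r show ?thesis
    proof
      assume "r = A t \<and> 1 \<le> K t" then show ?thesis using e by simp
    next
      assume "r = B t \<and> K t = 2" then show ?thesis using e by simp
    qed
  qed
qed

lemma stepM: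
  assumes y: "y \<in> U" and t: "t \<in> {1..n}"
    and IH: "\<forall>a b x. a \<in> {1..<t} \<and> b \<in> {1..<t} \<and> x \<in> {1..<t} \<and> a \<noteq> b \<and> a \<noteq> x \<and> b \<noteq> x \<and> {a,b,x} \<in> I
               \<longrightarrow> tp (ph y a) (ph y b) (ph y x) = 0"
    and q: "(i,j) \<in> Qp I t"
  shows "tp (ph y i) (ph y j) (ph y t) = 0"
proof -
  obtain r where r: "r = A t \<and> K t \<ge> 1 \<or> r = B t \<and> K t = 2" and ci: "conc I r i" and cj: "conc I r j"
    using pick[OF t q] by auto
  have g: "good I t (K t) (A t) (B t)" using good t by blast
  have rq: "r \<in> Qp I t" using r g unfolding good_def by auto
  note rd = Qp_D[OF rq]
  note qd = Qp_D[OF q]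
  define p where "p = cr (ph y (fst r)) (ph y (snd r))"
  have rng: "fst r \<in> {1..n}" "snd r \<in> {1..n}" "i \<in> {1..n}" "j \<in> {1..n}" using rd qd t by auto
  have p0: "p \<noteq> 0" using y rng rd unfolding U_def p_def by auto
  have pt: "dt (ph y t) p = 0" using ph_perp[OF t r] by (simp add: p_def dt_sym)
  have perp: "dt (ph y x) p = 0" if "conc I r x" "x \<in> {1..<t}" for x
  proof -
    from that(1) consider "x = fst r" | "x = snd r" | "x \<noteq> fst r" "x \<noteq> snd r" "{fst r, snd r, x} \<in> I"
      unfolding conc_def by blast
    then show ?thesis
    proof cases
      case 1 then show ?thesis by (simp add: p_def)
    next
      case 2 then show ?thesis by (simp add: p_def)
    next
      case 3
      then have "tp (ph y (fst r)) (ph y (snd r)) (ph y x) = 0" using IH rd that(2) by blast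
      then show ?thesis by (simp add: p_def tp_def dt_sym)
    qed
  qed
  have "dt (ph y i) p = 0" using perp ci qd by simp
  moreover have "dt (ph y j) p = 0" using perp cj qd by simp
  moreover have "cr (ph y i) (ph y j) \<noteq> 0" using y rng qd unfolding U_def by auto
  ultimately show ?thesis using keytp p0 pt by blast
qed

lemma Zall:
  assumes y: "y \<in> U"
  shows "i \<in> {1..n} \<Longrightarrow> j \<in> {1..n} \<Longrightarrow> l \<in> {1..n} \<Longrightarrow> i \<noteq> j \<Longrightarrow> i \<noteq> l \<Longrightarrow> j \<noteq> l \<Longrightarrow> {i,j,l} \<in> I
     \<Longrightarrow> tp (ph y i) (ph y j) (ph y l) = 0"
proof -
  have "\<forall>i j l. i \<in> {1..n} \<and> j \<in> {1..n} \<and> l \<in> {1..n} \<and> i \<noteq> j \<and> i \<noteq> l \<and> j \<noteq> l \<and> {i,j,l} \<in> I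
     \<and> i \<le> m \<and> j \<le> m \<and> l \<le> m \<longrightarrow> tp (ph y i) (ph y j) (ph y l) = 0" (is "?P m") for m
  proof (induction m)
    case 0
    then show ?case by auto
  next
    case (Suc m)
    show ?case
    proof (intro allI impI)
      fix i j l
      assume a: "i \<in> {1..n} \<and> j \<in> {1..n} \<and> l \<in> {1..n} \<and> i \<noteq> j \<and> i \<noteq> l \<and> j \<noteq> l \<and> {i,j,l} \<in> I
        \<and> i \<le> Suc m \<and> j \<le> Suc m \<and> l \<le> Suc m"
      show "tp (ph y i) (ph y j) (ph y l) = 0"
      proof (cases "i \<le> m \<and> j \<le> m \<and> l \<le> m")
        case True
        show ?thesis by (rule Suc.IH[rule_format]) (use a True in auto)
      next
        case False
        define t where "t = Suc m"
        have tn: "t \<le> n" using False a unfolding t_def by auto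
        have IH': "\<forall>a b x. a \<in> {1..<t} \<and> b \<in> {1..<t} \<and> x \<in> {1..<t} \<and> a \<noteq> b \<and> a \<noteq> x \<and> b \<noteq> x \<and> {a,b,x} \<in> I
               \<longrightarrow> tp (ph y a) (ph y b) (ph y x) = 0"
        proof (intro allI impI)
          fix a b x assume h: "a \<in> {1..<t} \<and> b \<in> {1..<t} \<and> x \<in> {1..<t} \<and> a \<noteq> b \<and> a \<noteq> x \<and> b \<noteq> x \<and> {a,b,x} \<in> I"
          then have "a \<in> {1..n} \<and> b \<in> {1..n} \<and> x \<in> {1..n}" using tn by auto
          then show "tp (ph y a) (ph y b) (ph y x) = 0" by (intro Suc.IH[rule_format]) (use h t_def in auto)
        qed
        from False a consider "l = t" | "i = t" | "j = t" unfolding t_def by linarith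
        then show ?thesis
        proof cases
          case 1
          then have "(i,j) \<in> Qp I t" using a unfolding Qp_def t_def by auto
          then show ?thesis using stepM[OF y _ IH'] a 1 by blast
        next
          case 2
          have "{j,l,t} = {i,j,l}" using 2 by auto
          then have "(j,l) \<in> Qp I t" using a 2 unfolding Qp_def t_def by auto
          then have "tp (ph y j) (ph y l) (ph y t) = 0" using stepM[OF y _ IH'] a 2 by blast
          then show ?thesis using 2 tp_cyc by metis
        next
          case 3
          have "{l,i,t} = {i,j,l}" using 3 by auto
          then have "(l,i) \<in> Qp I t" using a 3 unfolding Qp_def t_def by auto
          then have "tp (ph y l) (ph y i) (ph y t) = 0" using stepM[OF y _ IH'] a 3 by blast
          then show ?thesis using 3 tp_cyc by metis
        qed
      qed
    qed
  qed
  note HH = this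
  show "i \<in> {1..n} \<Longrightarrow> j \<in> {1..n} \<Longrightarrow> l \<in> {1..n} \<Longrightarrow> i \<noteq> j \<Longrightarrow> i \<noteq> l \<Longrightarrow> j \<noteq> l \<Longrightarrow> {i,j,l} \<in> I
     \<Longrightarrow> tp (ph y i) (ph y j) (ph y l) = 0" by (intro HH[of n, rule_format]) auto
qed


lemma inR:
  assumes y: "y \<in> U"
  shows "Phi y \<in> realization_space n I"
proof -
  have nz: "\<forall>t\<in>{1..n}. ph y t \<noteq> 0" using y unfolding U_def by blast
  have P: "Phi y \<in> PiE {1..n} (\<lambda>_. P2)" unfolding Phi_def restrict_PiE_iff using nz cls_in_P2 by blast
  have D: "\<forall>i\<in>{1..n}. \<forall>j\<in>{1..n}. i \<noteq> j \<longrightarrow> Phi y i \<noteq> Phi y j"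
  proof (intro ballI impI)
    fix i j assume ij: "i \<in> {1..n}" "j \<in> {1..n}" "i \<noteq> j"
    then have "cr (ph y i) (ph y j) \<noteq> 0" using y unfolding U_def by blast
    then show "Phi y i \<noteq> Phi y j" using ij nz cls_eq_iff unfolding Phi_def by auto
  qed
  have T: "\<forall>i\<in>{1..n}. \<forall>j\<in>{1..n}. \<forall>k\<in>{1..n}. i \<noteq> j \<and> i \<noteq> k \<and> j \<noteq> k \<longrightarrow>
         (det_zero (Phi y i) (Phi y j) (Phi y k) \<longleftrightarrow> {i, j, k} \<in> I)"
  proof (intro ballI impI)
    fix i j k assume ijk: "i \<in> {1..n}" "j \<in> {1..n}" "k \<in> {1..n}" "i \<noteq> j \<and> i \<noteq> k \<and> j \<noteq> k"
    have "det_zero (Phi y i) (Phi y j) (Phi y k) \<longleftrightarrow> tp (ph y i) (ph y j) (ph y k) = 0"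
      using ijk by (simp add: Phi_def det_zero_cls)
    also have "\<dots> \<longleftrightarrow> {i, j, k} \<in> I"
    proof
      assume "tp (ph y i) (ph y j) (ph y k) = 0"
      then show "{i, j, k} \<in> I" using y ijk unfolding U_def by blast
    next
      assume "{i, j, k} \<in> I"
      then show "tp (ph y i) (ph y j) (ph y k) = 0" using Zall[OF y] ijk by blast
    qed
    finally show "det_zero (Phi y i) (Phi y j) (Phi y k) \<longleftrightarrow> {i, j, k} \<in> I" .
  qed
  show ?thesis unfolding realization_space_def using P D T by blast
qed

lemma surjR:
  assumes G: "G \<in> realization_space n I"
  shows "\<exists>y\<in>U. Phi y = G"
proof -
  have GP: "G \<in> PiE {1..n} (\<lambda>_. P2)" and
    GD: "\<forall>i\<in>{1..n}. \<forall>j\<in>{1..n}. i \<noteq> j \<longrightarrow> G i \<noteq> G j" and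
    GT: "\<forall>i\<in>{1..n}. \<forall>j\<in>{1..n}. \<forall>k\<in>{1..n}. i \<noteq> j \<and> i \<noteq> k \<and> j \<noteq> k \<longrightarrow>
         (det_zero (G i) (G j) (G k) \<longleftrightarrow> {i, j, k} \<in> I)"
    using G unfolding realization_space_def by auto
  define g where "g t = rep (G t)" for t
  have g0: "g t \<noteq> 0" and gG: "G t = cls (g t)" if "t \<in> {1..n}" for t
    using rep[of "G t"] GP that unfolding g_def by (auto simp: PiE_iff)
  have gcr: "cr (g i) (g j) \<noteq> 0" if "i \<in> {1..n}" "j \<in> {1..n}" "i \<noteq> j" for i j
    using GD that g0 gG cls_eq_iff by metis
  have gtp: "tp (g i) (g j) (g k) = 0 \<longleftrightarrow> {i,j,k} \<in> I"
    if "i \<in> {1..n}" "j \<in> {1..n}" "k \<in> {1..n}" "i \<noteq> j" "i \<noteq> k" "j \<noteq> k" for i j k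
    using GT that gG det_zero_cls by metis
  define y where "y t = (if K t = 1 then sol (cr (g (fst (A t))) (g (snd (A t)))) (g t) else g t)" for t
  have claim: "t \<in> {1..n} \<Longrightarrow> \<exists>c. c \<noteq> 0 \<and> ph y t = c *s g t" for t
  proof (induction t rule: less_induct)
    case (less t)
    have gd: "good I t (K t) (A t) (B t)" using good less.prems by blast
    have rng: "\<And>q. q \<in> Qp I t \<Longrightarrow> fst q \<in> {1..n} \<and> snd q \<in> {1..n} \<and> fst q < t \<and> snd q < t
        \<and> fst q \<noteq> snd q \<and> {fst q, snd q, t} \<in> I"
      using less.prems by (auto dest!: Qp_D)
    consider "K t = 0" | "K t = 1" | "K t = 2" using gd unfolding good_def by linarith
    then show ?case
    proof cases
      case 1
      then show ?thesis by (intro exI[of _ 1]) (simp add: phi0 y_def)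
    next
      case 2
      then have q: "A t \<in> Qp I t" using gd unfolding good_def by simp
      note r = rng[OF q]
      obtain ca where ca: "ca \<noteq> 0" "ph y (fst (A t)) = ca *s g (fst (A t))" using less.IH r by blast
      obtain cb where cb: "cb \<noteq> 0" "ph y (snd (A t)) = cb *s g (snd (A t))" using less.IH r by blast
      define p where "p = cr (g (fst (A t))) (g (snd (A t)))"
      have p0: "p \<noteq> 0" unfolding p_def using gcr r by blast
      have "tp (g (fst (A t))) (g (snd (A t))) (g t) = 0"
        using gtp[of "fst (A t)" "snd (A t)" t] r less.prems by auto
      then have pt: "dt p (g t) = 0" by (simp add: p_def tp_def)
      have "ph y t = (ca * cb) *s cr p (sol p (g t))"
        using 2 r ca cb by (simp add: phi1 y_def p_def vec3_eq algebra_simps)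
      also have "\<dots> = (ca * cb) *s g t" using sol[OF p0 pt] by simp
      finally show ?thesis using ca cb by (intro exI[of _ "ca * cb"]) simp
    next
      case 3
      then have q: "A t \<in> Qp I t" "B t \<in> Qp I t" and sp: "sep I (A t) (B t)" using gd unfolding good_def by simp_all
      note r = rng[OF q(1)] and r' = rng[OF q(2)]
      obtain ca where ca: "ca \<noteq> 0" "ph y (fst (A t)) = ca *s g (fst (A t))" using less.IH r by blast
      obtain cb where cb: "cb \<noteq> 0" "ph y (snd (A t)) = cb *s g (snd (A t))" using less.IH r by blast
      obtain cc where cc: "cc \<noteq> 0" "ph y (fst (B t)) = cc *s g (fst (B t))" using less.IH r' by blast
      obtain cd where cd: "cd \<noteq> 0" "ph y (snd (B t)) = cd *s g (snd (B t))" using less.IH r' by blast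
      define p where "p = cr (g (fst (A t))) (g (snd (A t)))"
      define q' where "q' = cr (g (fst (B t))) (g (snd (B t)))"
      have p0: "p \<noteq> 0" unfolding p_def using gcr r by blast
      have q0: "q' \<noteq> 0" unfolding q'_def using gcr r' by blast
      have "tp (g (fst (A t))) (g (snd (A t))) (g t) = 0"
        using gtp[of "fst (A t)" "snd (A t)" t] r less.prems by auto
      then have pt: "dt p (g t) = 0" by (simp add: p_def tp_def)
      have "tp (g (fst (B t))) (g (snd (B t))) (g t) = 0"
        using gtp[of "fst (B t)" "snd (B t)" t] r' less.prems by auto
      then have qt: "dt q' (g t) = 0" by (simp add: q'_def tp_def)
      have pq: "cr p q' \<noteq> 0"
      proof
        assume "cr p q' = 0"
        then obtain e where e: "q' = e *s p" using par p0 by blast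
        from sp obtain x where x: "x \<in> {fst (B t), snd (B t)}" "x \<noteq> fst (A t)" "x \<noteq> snd (A t)"
          "{fst (A t), snd (A t), x} \<notin> I" unfolding sep_def by blast
        have xr: "x \<in> {1..n}" using x r' by auto
        have "tp (g (fst (A t))) (g (snd (A t))) (g x) \<noteq> 0"
          using gtp[of "fst (A t)" "snd (A t)" x] r x xr by auto
        then have px: "dt p (g x) \<noteq> 0" by (simp add: p_def tp_def)
        have "dt q' (g x) = 0" using x(1) by (auto simp: q'_def)
        then have "e * dt p (g x) = 0" using e by simp
        moreover have "e \<noteq> 0" using e q0 by auto
        ultimately show False using px by simp
      qed
      obtain e where e: "g t = e *s cr p q'" using perp2[OF pq] pt qt by (metis dt_sym)
      have "e \<noteq> 0" using e g0 less.prems by auto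
      have "ph y t = (ca * cb * cc * cd) *s cr p q'"
        using 3 r r' ca cb cc cd by (simp add: phi2 p_def q'_def vec3_eq algebra_simps)
      also have "\<dots> = (ca * cb * cc * cd / e) *s g t" using e \<open>e \<noteq> 0\<close> by (simp add: vec3_eq)
      finally show ?thesis using ca cb cc cd \<open>e \<noteq> 0\<close> by (intro exI[of _ "ca * cb * cc * cd / e"]) simp
    qed
  qed
  have yU: "y \<in> U"
  proof -
    have "\<forall>t\<in>{1..n}. ph y t \<noteq> 0" using claim g0 by fastforce
    moreover have "\<forall>i\<in>{1..n}. \<forall>j\<in>{1..n}. i \<noteq> j \<longrightarrow> cr (ph y i) (ph y j) \<noteq> 0"
    proof (intro ballI impI)
      fix i j assume ij: "i \<in> {1..n}" "j \<in> {1..n}" "i \<noteq> j"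
      obtain a where "a \<noteq> 0" "ph y i = a *s g i" using claim ij by blast
      moreover obtain b where "b \<noteq> 0" "ph y j = b *s g j" using claim ij by blast
      ultimately show "cr (ph y i) (ph y j) \<noteq> 0" using gcr[OF ij] by simp
    qed
    moreover have "\<forall>i\<in>{1..n}. \<forall>j\<in>{1..n}. \<forall>k\<in>{1..n}. i \<noteq> j \<and> i \<noteq> k \<and> j \<noteq> k \<and> {i,j,k} \<notin> I \<longrightarrow> tp (ph y i) (ph y j) (ph y k) \<noteq> 0"
    proof (intro ballI impI)
      fix i j k assume ijk: "i \<in> {1..n}" "j \<in> {1..n}" "k \<in> {1..n}" "i \<noteq> j \<and> i \<noteq> k \<and> j \<noteq> k \<and> {i,j,k} \<notin> I"
      obtain a where "a \<noteq> 0" "ph y i = a *s g i" using claim ijk by blast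
      moreover obtain b where "b \<noteq> 0" "ph y j = b *s g j" using claim ijk by blast
      moreover obtain c where "c \<noteq> 0" "ph y k = c *s g k" using claim ijk by blast
      moreover have "tp (g i) (g j) (g k) \<noteq> 0" using gtp ijk by blast
      ultimately show "tp (ph y i) (ph y j) (ph y k) \<noteq> 0" by simp
    qed
    ultimately show ?thesis unfolding U_def by blast
  qed
  have "Phi y = G"
  proof (rule PiE_ext[OF _ GP])
    show "Phi y \<in> PiE {1..n} (\<lambda>_. P2)" using inR[OF yU] unfolding realization_space_def by blast
  next
    fix t assume t: "t \<in> {1..n}"
    obtain c where "c \<noteq> 0" "ph y t = c *s g t" using claim t by blast
    then show "Phi y t = G t" using t gG by (simp add: Phi_def cls_smult)
  qed
  then show ?thesis using yU by blast
qed


lemma bad_point: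
  assumes cl: "zariski_closed n C" and GR: "G \<in> realization_space n I" and nC: "G \<notin> C"
  obtains f y where "f \<in> polyfun n" "y \<in> U" "f (ph y) \<noteq> 0"
    "\<And>w. w \<in> U \<Longrightarrow> Phi w \<in> C \<Longrightarrow> f (ph w) = 0"
proof -
  obtain F where F: "\<forall>f\<in>F. multihom n f" and
    C: "C = {H \<in> PiE {1..n} (\<lambda>_. P2). \<forall>f\<in>F. \<forall>x. (\<forall>i\<in>{1..n}. x i \<in> H i) \<longrightarrow> f x = 0}"
    using cl unfolding zariski_closed_def by blast
  have GP: "G \<in> PiE {1..n} (\<lambda>_. P2)" using GR unfolding realization_space_def by blast
  obtain f x where f: "f \<in> F" and x: "\<forall>i\<in>{1..n}. x i \<in> G i" and fx: "f x \<noteq> 0"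
    using nC GP unfolding C by blast
  obtain y where y: "y \<in> U" "Phi y = G" using surjR[OF GR] by blast
  have "\<forall>i\<in>{1..n}. \<exists>c. c \<noteq> 0 \<and> x i = c *s ph y i"
    using x y(2) by (auto simp: Phi_def in_cls)
  then have fy: "f (ph y) \<noteq> 0" using multihom_scale F f fx by blast
  have fp: "f \<in> polyfun n" using F f unfolding multihom_def by blast
  have "f (ph w) = 0" if "w \<in> U" "Phi w \<in> C" for w
  proof -
    have "\<forall>i\<in>{1..n}. ph w i \<in> Phi w i" by (simp add: Phi_def self_in_cls)
    then show ?thesis using that(2) f unfolding C by blast
  qed
  then show ?thesis using that[OF fp y(1) fy] by blast
qed

lemma U_open:
  assumes y1: "y1 \<in> U"
  shows "\<exists>g\<in>polyfun n. g y1 \<noteq> 0 \<and> (\<forall>y. g y \<noteq> 0 \<longrightarrow> y \<in> U)"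
proof -
  have P: "\<forall>i\<in>{1..n}. \<forall>j. (\<lambda>y. ph y i $ j) \<in> polyfun n" using ph_poly by blast
  define S2 where "S2 = {c. fst c \<in> {1..n} \<and> snd c \<in> {1..n} \<and> fst c \<noteq> (snd c :: nat)}"
  define S3 where "S3 = {c. fst c \<in> {1..n} \<and> fst (snd c) \<in> {1..n} \<and> snd (snd c) \<in> {1..n} \<and>
      fst c \<noteq> fst (snd c) \<and> fst c \<noteq> snd (snd c) \<and> fst (snd c) \<noteq> (snd (snd c) :: nat) \<and>
      {fst c, fst (snd c), snd (snd c)} \<notin> I}"
  have fin2: "finite S2" by (rule finite_subset[of _ "{1..n} \<times> {1..n}"]) (auto simp: S2_def)
  have fin3: "finite S3" by (rule finite_subset[of _ "{1..n} \<times> {1..n} \<times> {1..n}"]) (auto simp: S3_def)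
  obtain g1 where g1: "g1 \<in> polyfun n" "g1 y1 \<noteq> 0" "\<forall>y. g1 y \<noteq> 0 \<longrightarrow> (\<forall>t\<in>{1..n}. ph y t \<noteq> 0)"
    using witness[of "{1..n}" "\<lambda>t y. ph y t" n y1] P y1 unfolding U_def by auto
  obtain g2 where g2: "g2 \<in> polyfun n" "g2 y1 \<noteq> 0"
      "\<forall>y. g2 y \<noteq> 0 \<longrightarrow> (\<forall>c\<in>S2. cr (ph y (fst c)) (ph y (snd c)) \<noteq> 0)"
  proof -
    have "\<forall>c\<in>S2. \<forall>j. (\<lambda>y. cr (ph y (fst c)) (ph y (snd c)) $ j) \<in> polyfun n"
      unfolding S2_def by (intro ballI polyfun_cr) (use P in auto)
    moreover have "\<forall>c\<in>S2. cr (ph y1 (fst c)) (ph y1 (snd c)) \<noteq> 0" using y1 unfolding U_def S2_def by blast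
    ultimately show ?thesis using witness[OF fin2, of "\<lambda>c y. cr (ph y (fst c)) (ph y (snd c))" n y1] that by blast
  qed
  obtain g3 where g3: "g3 \<in> polyfun n" "g3 y1 \<noteq> 0"
      "\<forall>y. g3 y \<noteq> 0 \<longrightarrow> (\<forall>c\<in>S3. (\<chi> _. tp (ph y (fst c)) (ph y (fst (snd c))) (ph y (snd (snd c))))  \<noteq> (0::complex^3))"
  proof -
    have "\<forall>c\<in>S3. \<forall>j. (\<lambda>y. (\<chi> _. tp (ph y (fst c)) (ph y (fst (snd c))) (ph y (snd (snd c)))) $ j :: complex) \<in> polyfun n"
      unfolding S3_def by (simp, intro allI impI polyfun_tp) (use P in auto)
    moreover have "\<forall>c\<in>S3. (\<chi> _. tp (ph y1 (fst c)) (ph y1 (fst (snd c))) (ph y1 (snd (snd c)))) \<noteq> (0::complex^3)"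
      using y1 unfolding U_def S3_def by (auto simp: vec_eq_iff)
    ultimately show ?thesis using witness[OF fin3, of "\<lambda>c y. (\<chi> _. tp (ph y (fst c)) (ph y (fst (snd c))) (ph y (snd (snd c)))) :: complex^3" n y1] that by blast
  qed
  have m1: "(\<lambda>y. g1 y * g2 y * g3 y) \<in> polyfun n" using g1 g2 g3 by (intro polyfun.pmult)
  have m2: "g1 y1 * g2 y1 * g3 y1 \<noteq> 0" using g1 g2 g3 by simp
  have m3: "g1 y * g2 y * g3 y \<noteq> 0 \<longrightarrow> y \<in> U" for y
  proof
    assume "g1 y * g2 y * g3 y \<noteq> 0"
    then have h: "g1 y \<noteq> 0" "g2 y \<noteq> 0" "g3 y \<noteq> 0" by auto
    have "\<forall>i\<in>{1..n}. \<forall>j\<in>{1..n}. i \<noteq> j \<longrightarrow> cr (ph y i) (ph y j) \<noteq> 0"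
      using g2(3) h(2) unfolding S2_def by auto
    moreover have "\<forall>i\<in>{1..n}. \<forall>j\<in>{1..n}. \<forall>k\<in>{1..n}. i \<noteq> j \<and> i \<noteq> k \<and> j \<noteq> k \<and> {i,j,k} \<notin> I \<longrightarrow> tp (ph y i) (ph y j) (ph y k) \<noteq> 0"
    proof (intro ballI impI)
      fix i j k assume ijk: "i \<in> {1..n}" "j \<in> {1..n}" "k \<in> {1..n}" "i \<noteq> j \<and> i \<noteq> k \<and> j \<noteq> k \<and> {i,j,k} \<notin> I"
      then have "(i,j,k) \<in> S3" unfolding S3_def by simp
      then have "(\<chi> _. tp (ph y i) (ph y j) (ph y k)) \<noteq> (0::complex^3)" using g3(3) h(3) by fastforce
      then show "tp (ph y i) (ph y j) (ph y k) \<noteq> 0" by (auto simp: vec_eq_iff)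
    qed
    ultimately show "y \<in> U" using g1(3) h(1) unfolding U_def by blast
  qed
  show ?thesis by (rule bexI[of _ "\<lambda>y. g1 y * g2 y * g3 y"]) (use m1 m2 m3 in auto)
qed

lemma irr:
  assumes ne: "realization_space n I \<noteq> {}"
  shows "zariski_irreducible n (realization_space n I)"
  unfolding zariski_irreducible_def
proof (intro conjI allI impI)
  show "realization_space n I \<noteq> {}" by (rule ne)
  show "realization_space n I \<subseteq> PiE {1..n} (\<lambda>_. P2)" unfolding realization_space_def by blast
  fix C1 C2
  assume a: "zariski_closed n C1 \<and> zariski_closed n C2 \<and> realization_space n I \<subseteq> C1 \<union> C2"
  show "realization_space n I \<subseteq> C1 \<or> realization_space n I \<subseteq> C2"
  proof (rule ccontr)
    assume "\<not> (realization_space n I \<subseteq> C1 \<or> realization_space n I \<subseteq> C2)"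
    then obtain G1 G2 where G1: "G1 \<in> realization_space n I" "G1 \<notin> C1"
      and G2: "G2 \<in> realization_space n I" "G2 \<notin> C2" by blast
    obtain f1 y1 where f1: "f1 \<in> polyfun n" "y1 \<in> U" "f1 (ph y1) \<noteq> 0"
      "\<And>w. w \<in> U \<Longrightarrow> Phi w \<in> C1 \<Longrightarrow> f1 (ph w) = 0"
      using bad_point[of C1 G1] a G1 by blast
    obtain f2 y2 where f2: "f2 \<in> polyfun n" "y2 \<in> U" "f2 (ph y2) \<noteq> 0"
      "\<And>w. w \<in> U \<Longrightarrow> Phi w \<in> C2 \<Longrightarrow> f2 (ph w) = 0"
      using bad_point[of C2 G2] a G2 by blast
    have P: "\<forall>i\<in>{1..n}. \<forall>j. (\<lambda>y. ph y i $ j) \<in> polyfun n" using ph_poly by blast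
    have F1: "(\<lambda>y. f1 (ph y)) \<in> polyfun n" using polyfun_comp[OF f1(1) P] .
    have F2: "(\<lambda>y. f2 (ph y)) \<in> polyfun n" using polyfun_comp[OF f2(1) P] .
    obtain g where g: "g \<in> polyfun n" "g y1 \<noteq> 0" "\<forall>y. g y \<noteq> 0 \<longrightarrow> y \<in> U" using U_open[OF f1(2)] by blast
    obtain z where z: "f1 (ph z) * f2 (ph z) \<noteq> 0"
      using prod_nz[OF F1 F2, of y1 y2] f1(3) f2(3) by auto
    have F12: "(\<lambda>y. f1 (ph y) * f2 (ph y)) \<in> polyfun n" using F1 F2 by (rule polyfun.pmult)
    obtain w where w: "f1 (ph w) * f2 (ph w) * g w \<noteq> 0"
      using prod_nz[OF F12 g(1), of z y1] z g(2) by auto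
    then have wU: "w \<in> U" using g(3) by auto
    then have "Phi w \<in> C1 \<union> C2" using inR a by blast
    then show False using f1(4)[OF wU] f2(4)[OF wU] w by auto
  qed
qed

end


lemma inc_iff:
  assumes lines: "\<forall>i\<in>{1..n}. H i \<in> P2" and inj: "inj_on H {1..n}"
    and r: "i \<in> {1..n}" "j \<in> {1..n}" "k \<in> {1..n}" and d: "i \<noteq> j" "i \<noteq> k" "j \<noteq> k"
  shows "{i,j,k} \<in> incidence n H \<longleftrightarrow> tp (rep (H i)) (rep (H j)) (rep (H k)) = 0"
proof -
  define h where "h m = rep (H m)" for m
  have h0: "h m \<noteq> 0" and hH: "H m = cls (h m)" if "m \<in> {1..n}" for m
    using rep[of "H m"] lines that unfolding h_def by auto
  have "H i \<noteq> H j" using inj r d unfolding inj_on_def by blast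
  then have cij: "cr (h i) (h j) \<noteq> 0" using hH h0 cls_eq_iff r by metis
  have ol: "on_line (cls x) (H m) \<longleftrightarrow> dt (h m) x = 0" if "m \<in> {1..n}" for x m
    using on_line_cls[OF h0[OF that]] hH[OF that] by simp
  show ?thesis unfolding h_def[symmetric]
  proof
    assume "{i,j,k} \<in> incidence n H"
    then obtain i' j' k' p where e: "{i,j,k} = {i',j',k'}" and p: "p \<in> P2"
      and o: "on_line p (H i')" "on_line p (H j')" "on_line p (H k')"
      unfolding incidence_def by blast
    obtain x where x: "x \<noteq> 0" "p = cls x" using P2_E p by blast
    have om: "on_line p (H m)" if "m \<in> {i,j,k}" for m
      using that e o by auto
    have "dt (h m) x = 0" if "m \<in> {i,j,k}" for m
      using om[OF that] ol[of m x] that r x(2) by auto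
    then show "tp (h i) (h j) (h k) = 0" using keytp[OF x(1) _ _ _ cij] by simp
  next
    assume t: "tp (h i) (h j) (h k) = 0"
    define p where "p = cls (cr (h i) (h j))"
    have pP: "p \<in> P2" using cij cls_in_P2 p_def by simp
    have "on_line p (H i)" "on_line p (H j)" using ol r by (simp_all add: p_def)
    moreover have "on_line p (H k)" using ol r t by (simp add: p_def tp_def dt_sym)
    ultimately show "{i,j,k} \<in> incidence n H" unfolding incidence_def
      using r d pP by blast
  qed
qed

lemma exists_good:
  assumes lines: "\<forall>i\<in>{1..n}. H i \<in> P2" and inj: "inj_on H {1..n}"
    and hyp: "\<forall>t\<in>{1..n}. finite (line_points (H t) \<inter> mult_pts t H)
                            \<and> card (line_points (H t) \<inter> mult_pts t H) \<le> 2"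
    and t: "t \<in> {1..n}"
  shows "\<exists>k a b. good (incidence n H) t k a b"
proof -
  define I where "I = incidence n H"
  define h where "h m = rep (H m)" for m
  have h0: "h m \<noteq> 0" and hH: "H m = cls (h m)" if "m \<in> {1..n}" for m
    using rep[of "H m"] lines that unfolding h_def by auto
  have cr0: "cr (h i) (h j) \<noteq> 0" if "i \<in> {1..n}" "j \<in> {1..n}" "i \<noteq> j" for i j
  proof -
    have "H i \<noteq> H j" using inj that unfolding inj_on_def by blast
    then show ?thesis using hH h0 cls_eq_iff that by metis
  qed
  have II: "{i,j,k} \<in> I \<longleftrightarrow> tp (h i) (h j) (h k) = 0"
    if "i \<in> {1..n}" "j \<in> {1..n}" "k \<in> {1..n}" "i \<noteq> j" "i \<noteq> k" "j \<noteq> k" for i j k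
    unfolding I_def h_def using inc_iff[OF lines inj that] .
  define pt where "pt q = cls (cr (h (fst q)) (h (snd q)))" for q
  define M where "M = line_points (H t) \<inter> mult_pts t H"
  have Mfin: "finite M" and Mc: "card M \<le> 2" using hyp t unfolding M_def by auto
  have qr: "fst q \<in> {1..n} \<and> snd q \<in> {1..n} \<and> fst q < t \<and> snd q < t \<and> fst q \<noteq> snd q \<and> {fst q, snd q, t} \<in> I"
    if "q \<in> Qp I t" for q using Qp_D[OF that] t by auto
  have ptM: "pt q \<in> M" if q: "q \<in> Qp I t" for q
  proof -
    note r = qr[OF q]
    have c0: "cr (h (fst q)) (h (snd q)) \<noteq> 0" using cr0 r by blast
    have P: "pt q \<in> P2" using c0 cls_in_P2 pt_def by simp
    have tp0: "tp (h (fst q)) (h (snd q)) (h t) = 0" using II[of "fst q" "snd q" t] r t by auto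
    have ol: "on_line (pt q) (H m) \<longleftrightarrow> dt (h m) (cr (h (fst q)) (h (snd q))) = 0" if "m \<in> {1..n}" for m
      using on_line_cls[OF h0[OF that]] hH[OF that] pt_def by simp
    have olt: "on_line (pt q) (H t)" using ol[OF t] tp0 by (simp add: tp_def dt_sym)
    have sub: "{fst q, snd q, t} \<subseteq> {i \<in> {1..t}. on_line (pt q) (H i)}"
      using olt ol r t by auto
    have "card {fst q, snd q, t} = 3" using r by auto
    then have "card {i \<in> {1..t}. on_line (pt q) (H i)} \<ge> 3"
      using card_mono[OF _ sub] by simp
    then show ?thesis using P olt unfolding M_def line_points_def mult_pts_def by auto
  qed
  define Ms where "Ms = pt ` Qp I t"
  have MsM: "Ms \<subseteq> M" using ptM Ms_def by auto
  have Msfin: "finite Ms" using finite_subset[OF MsM Mfin] .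
  have Msc: "card Ms \<le> 2" using card_mono[OF Mfin MsM] Mc by simp
  have same: "conc I r (fst q) \<and> conc I r (snd q)" if q: "q \<in> Qp I t" and rr: "r \<in> Qp I t" and e: "pt q = pt r" for q r
  proof -
    note a = qr[OF q] and b = qr[OF rr]
    have "conc I r x" if x: "x \<in> {fst q, snd q}" for x
    proof -
      have "dt (cr (h (fst q)) (h (snd q))) (h x) = 0" using x by auto
      then have d: "dt (cr (h (fst r)) (h (snd r))) (h x) = 0" using cls_dt e unfolding pt_def by blast
      show ?thesis
      proof (cases "x = fst r \<or> x = snd r")
        case True then show ?thesis unfolding conc_def by auto
      next
        case False
        have "x \<in> {1..n}" using x a by auto
        then have "{fst r, snd r, x} \<in> I" using II[of "fst r" "snd r" x] b False d by (simp add: tp_def)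
        then show ?thesis unfolding conc_def by auto
      qed
    qed
    then show ?thesis by auto
  qed
  have sepl: "sep I q r" if q: "q \<in> Qp I t" and rr: "r \<in> Qp I t" and ne: "pt q \<noteq> pt r" for q r
  proof (rule ccontr)
    assume ns: "\<not> sep I q r"
    note a = qr[OF q] and b = qr[OF rr]
    have d: "dt (h x) (cr (h (fst q)) (h (snd q))) = 0" if x: "x \<in> {fst r, snd r}" for x
    proof (cases "x = fst q \<or> x = snd q")
      case True then show ?thesis by auto
    next
      case False
      then have "{fst q, snd q, x} \<in> I" using ns x unfolding sep_def by blast
      moreover have "x \<in> {1..n}" using x b by auto
      ultimately show ?thesis using II[of "fst q" "snd q" x] a False by (simp add: tp_def dt_sym)
    qed
    obtain c where c: "cr (h (fst q)) (h (snd q)) = c *s cr (h (fst r)) (h (snd r))"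
      using perp2[OF cr0[of "fst r" "snd r"]] b d by auto
    have "c \<noteq> 0" using c cr0[of "fst q" "snd q"] a by auto
    then have "pt q = pt r" unfolding pt_def using c cls_smult by simp
    then show False using ne by simp
  qed
  consider "card Ms = 0" | "card Ms = 1" | "card Ms = 2" using Msc by linarith
  then show ?thesis
  proof cases
    case 1
    then have "Qp I t = {}" using Msfin Ms_def by simp
    then show ?thesis unfolding I_def[symmetric] by (intro exI[of _ 0]) (simp add: good_def)
  next
    case 2
    then obtain m where m: "Ms = {m}" using card_1_singletonE by blast
    then have "m \<in> pt ` Qp I t" unfolding Ms_def by simp
    then obtain q0 where q0x: "m = pt q0" "q0 \<in> Qp I t" by (rule imageE)
    then have q0: "q0 \<in> Qp I t" "pt q0 = m" by simp_all
    have "good I t 1 q0 q0" unfolding good_def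
    proof (intro conjI impI ballI)
      fix q assume q: "q \<in> Qp I t"
      then have "pt q \<in> Ms" unfolding Ms_def by simp
      then have "pt q = pt q0" using m q0 by simp
      then show "(1 \<le> (1::nat) \<and> conc I q0 (fst q) \<and> conc I q0 (snd q)) \<or> (1 = (2::nat) \<and> conc I q0 (fst q) \<and> conc I q0 (snd q))"
        using same[OF q q0(1)] by simp
    qed (use q0 in auto)
    then show ?thesis unfolding I_def[symmetric] by blast
  next
    case 3
    then have "\<exists>m1 m2. Ms = {m1, m2} \<and> m1 \<noteq> m2" by (simp add: card_2_iff)
    then obtain m1 m2 where m: "Ms = {m1, m2}" "m1 \<noteq> m2" by blast
    have i1: "m1 \<in> pt ` Qp I t" using m(1) unfolding Ms_def by (metis insertI1)
    have i2: "m2 \<in> pt ` Qp I t" using m(1) unfolding Ms_def by (metis insertI1 insert_commute)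
    obtain q1 where q1': "m1 = pt q1" "q1 \<in> Qp I t" using i1 by (rule imageE)
    obtain q2 where q2': "m2 = pt q2" "q2 \<in> Qp I t" using i2 by (rule imageE)
    have q1: "q1 \<in> Qp I t" "pt q1 = m1" using q1' by simp_all
    have q2: "q2 \<in> Qp I t" "pt q2 = m2" using q2' by simp_all
    have "good I t 2 q1 q2" unfolding good_def
    proof (intro conjI impI ballI)
      show "sep I q1 q2" using sepl[OF q1(1) q2(1)] q1 q2 m by simp
    next
      fix q assume q: "q \<in> Qp I t"
      then have "pt q \<in> Ms" unfolding Ms_def by simp
      then have "pt q = pt q1 \<or> pt q = pt q2" using m q1 q2 by simp
      then show "(1 \<le> (2::nat) \<and> conc I q1 (fst q) \<and> conc I q1 (snd q)) \<or> (2 = (2::nat) \<and> conc I q2 (fst q) \<and> conc I q2 (snd q))"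
        using same[OF q q1(1)] same[OF q q2(1)] by auto
    qed (use q1 q2 in auto)
    then show ?thesis unfolding I_def[symmetric] by blast
  qed
qed

theorem mainTheorem2:
  fixes n :: nat and H :: "nat \<Rightarrow> (complex^3) set"
  assumes lines: "\<forall>i\<in>{1..n}. H i \<in> P2"
    and distinct_lines: "inj_on H {1..n}"
    and hyp: "\<forall>t\<in>{1..n}. finite (line_points (H t) \<inter> mult_pts t H)
                            \<and> card (line_points (H t) \<inter> mult_pts t H) \<le> 2"
  shows "zariski_irreducible n (realization_space n (incidence n H))"
proof -
  define I where "I = incidence n H"
  have ex: "\<exists>k a b. good I t k a b" if "t \<in> {1..n}" for t
    using exists_good[OF lines distinct_lines hyp that] unfolding I_def .
  define K where "K t = (SOME k. \<exists>a b. good I t k a b)" for t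
  define A where "A t = (SOME a. \<exists>b. good I t (K t) a b)" for t
  define B where "B t = (SOME b. good I t (K t) (A t) b)" for t
  have gK: "good I t (K t) (A t) (B t)" if "t \<in> {1..n}" for t
  proof -
    have "\<exists>a b. good I t (K t) a b" unfolding K_def using ex[OF that] by (rule someI_ex)
    then have "\<exists>b. good I t (K t) (A t) b" unfolding A_def by (rule someI_ex)
    then show ?thesis unfolding B_def by (rule someI_ex)
  qed
  interpret arr n I K A B
    by unfold_locales (use gK in blast)
  define h where "h m = rep (H m)" for m
  have h0: "h m \<noteq> 0" and hH: "H m = cls (h m)" if "m \<in> {1..n}" for m
    using rep[of "H m"] lines that unfolding h_def by auto
  have "restrict H {1..n} \<in> realization_space n I"
    unfolding realization_space_def
  proof (intro CollectI conjI ballI impI)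
    show "restrict H {1..n} \<in> PiE {1..n} (\<lambda>_. P2)" unfolding restrict_PiE_iff using lines by blast
  next
    fix i j assume ij: "i \<in> {1..n}" "j \<in> {1..n}" "i \<noteq> j"
    then have "H i \<noteq> H j" using distinct_lines unfolding inj_on_def by blast
    then show "restrict H {1..n} i \<noteq> restrict H {1..n} j" using ij by simp
  next
    fix i j k assume r: "i \<in> {1..n}" "j \<in> {1..n}" "k \<in> {1..n}" and d: "i \<noteq> j \<and> i \<noteq> k \<and> j \<noteq> k"
    have "det_zero (H i) (H j) (H k) \<longleftrightarrow> tp (h i) (h j) (h k) = 0"
      using hH[of i] hH[of j] hH[of k] r det_zero_cls by simp
    also have "\<dots> \<longleftrightarrow> {i,j,k} \<in> I" unfolding I_def h_def using inc_iff[OF lines distinct_lines r] d by simp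
    finally show "det_zero (restrict H {1..n} i) (restrict H {1..n} j) (restrict H {1..n} k) \<longleftrightarrow> {i, j, k} \<in> I"
      using r by simp
  qed
  then have "realization_space n I \<noteq> {}" by blast
  then have "zariski_irreducible n (realization_space n I)" by (rule irr)
  then show ?thesis unfolding I_def .
qed


end
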